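(* Let $n\ge 2$ and let $MAP_n^{2n-3}B$ be the set of $\lceil \log_2 n\rceil$ variables $move\text{-}L_1^{2^j-2}\text{-}L_1^{2^j-1}(2^j-1)$ for $j=1,\dots,\lceil\log_2 n\rceil$, where $L_1^0$ denotes $L^0$ (i.e. $move\text{-}L^0\text{-}L_1^1$ at step 1, $move\text{-}L_1^2\text{-}L_1^3$ at step 3, $move\text{-}L_1^6\text{-}L_1^7$ at step 7, $move\text{-}L_1^{14}\text{-}L_1^{15}$ at step 15, ...). Then $MAP_n^{2n-3}B$ is a backdoor for the CNF formula $MAP_n^{2n-3}$.
   Context: MAP planning domain. Fix $n\ge 2$. The map is an undirected graph with $3n-3$ nodes: a centre $L^0$; a path (branch 1) $L^0 - L_1^1 - \dots - L_1^{2n-3}$; and, for each $i=2,\dots,n$, a single node $L_i^1$ adjacent to $L^0$. Facts are $at\text{-}x$ and $visited\text{-}x$. For every edge $\{x,y\}$ and both orientations there is an action $move\text{-}x\text{-}y$ with precondition $\{at\text{-}x\}$, add effects $\{at\text{-}y, visited\text{-}y\}$, delete effect $\{at\text{-}x\}$. The initial state is $\{at\text{-}L^0\}$. The goal of $MAP_n^{2n-3}$ is $\{visited\text{-}L_1^{2n-3}, visited\text{-}L_2^1\}$. The CNF formula $MAP_n^{2n-3}$ is the standard Graphplan-based (Blackbox-style) SAT encoding of this task with $T=2n-2$ time steps (unsatisfiable, since a shortest plan has $2n-1$ steps). Build the Graphplan planning graph from the initial state, with a NOOP action $NOOP\text{-}p$ (precondition and add effect $\{p\}$) for each fact $p$.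 For each $t=1,\dots,T$ there is a variable $a(t)$ for every action $a$ (including NOOPs) in action layer $t$. Clauses: goal clauses $\{a(T): g\in add(a)\}$ for each goal $g$; precondition clauses $\{\neg a(t)\}\cup\{a'(t-1): p\in add(a')\}$ for each $a(t)$, $t\ge 2$, $p\in pre(a)$; mutex clauses $\{\neg a(t),\neg a'(t)\}$ for pairs of actions Graphplan marks mutually exclusive at layer $t$ (interference or competing needs); in particular any two move actions at the same step are mutually exclusive. For an unsatisfiable CNF $F$, a set $B$ of variables is a backdoor (with respect to unit propagation) if for every truth assignment to the variables in $B$, unit propagation on $F$ under that assignment derives the empty clause. *)

theory Defs
  imports Complex_Main
begin

record ('f, 'a) strips =
  acts :: "'a set"            \<comment> \<open>all actions, including the NOOPs\<close>
  pre  :: "'a \<Rightarrow> 'f set"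
  add  :: "'a \<Rightarrow> 'f set"
  del  :: "'a \<Rightarrow> 'f set"
  init :: "'f set"
  goal :: "'f set"

definition gp_acts :: "('f, 'a) strips \<Rightarrow> 'f set \<Rightarrow> ('f \<times> 'f) set \<Rightarrow> 'a set" where
  "gp_acts P F FM = {a \<in> acts P. pre P a \<subseteq> F \<and>
       (\<forall>p \<in> pre P a. \<forall>q \<in> pre P a. (p, q) \<notin> FM)}"

definition interfere :: "('f, 'a) strips \<Rightarrow> 'a \<Rightarrow> 'a \<Rightarrow> bool" where
  "interfere P a b \<longleftrightarrow>
     del P a \<inter> (pre P b \<union> add P b) \<noteq> {} \<or> del P b \<inter> (pre P a \<union> add P a) \<noteq> {}"

definition gp_act_mutex :: "('f, 'a) strips \<Rightarrow> 'f set \<Rightarrow> ('f \<times> 'f) set \<Rightarrow> ('a \<times> 'a) set" where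
  "gp_act_mutex P F FM = {(a, b). a \<in> gp_acts P F FM \<and> b \<in> gp_acts P F FM \<and> a \<noteq> b \<and>
       (interfere P a b \<or> (\<exists>p \<in> pre P a. \<exists>q \<in> pre P b. (p, q) \<in> FM))}"

fun gp_facts :: "('f, 'a) strips \<Rightarrow> nat \<Rightarrow> 'f set \<times> ('f \<times> 'f) set" where
  "gp_facts P 0 = (init P, {})"
| "gp_facts P (Suc t) =
     (let F = fst (gp_facts P t); FM = snd (gp_facts P t);
          A = gp_acts P F FM; AM = gp_act_mutex P F FM;
          F' = (\<Union>a \<in> A. add P a)
      in (F', {(p, q). p \<in> F' \<and> q \<in> F' \<and> p \<noteq> q \<and>
                 (\<forall>a \<in> A. \<forall>b \<in> A. p \<in> add P a \<and> q \<in> add P b \<longrightarrow> (a, b) \<in> AM)}))"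

text \<open>Action layer t (for t \<ge> 1) and its mutex relation.\<close>
definition gp_layer :: "('f, 'a) strips \<Rightarrow> nat \<Rightarrow> 'a set" where
  "gp_layer P t = gp_acts P (fst (gp_facts P (t - 1))) (snd (gp_facts P (t - 1)))"

definition gp_mutex :: "('f, 'a) strips \<Rightarrow> nat \<Rightarrow> ('a \<times> 'a) set" where
  "gp_mutex P t = gp_act_mutex P (fst (gp_facts P (t - 1))) (snd (gp_facts P (t - 1)))"

type_synonym 'v lit = "'v \<times> bool"   \<comment> \<open>(v, True) = v, (v, False) = not v\<close>

definition neg :: "'v lit \<Rightarrow> 'v lit" where
  "neg l = (fst l, \<not> snd l)"

inductive_set up_lits :: "'v lit set set \<Rightarrow> 'v lit set \<Rightarrow> 'v lit set"
  for F :: "'v lit set set" and S0 :: "'v lit set" where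
  base: "l \<in> S0 \<Longrightarrow> l \<in> up_lits F S0"
| unit: "C \<in> F \<Longrightarrow> l \<in> C \<Longrightarrow> (\<forall>m \<in> C - {l}. neg m \<in> up_lits F S0) \<Longrightarrow> l \<in> up_lits F S0"

definition up_conflict :: "'v lit set set \<Rightarrow> 'v lit set \<Rightarrow> bool" where
  "up_conflict F S0 \<longleftrightarrow> (\<exists>C \<in> F. \<forall>m \<in> C. neg m \<in> up_lits F S0)"

definition backdoor :: "'v lit set set \<Rightarrow> 'v set \<Rightarrow> bool" where
  "backdoor F B \<longleftrightarrow> (\<forall>\<alpha> :: 'v \<Rightarrow> bool. up_conflict F {(v, \<alpha> v) | v. v \<in> B})"

definition gp_cnf :: "('f, 'a) strips \<Rightarrow> nat \<Rightarrow> ('a \<times> nat) lit set set" where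
  "gp_cnf P T =
     {{((a, T), True) | a. a \<in> gp_layer P T \<and> g \<in> add P a} | g. g \<in> goal P}
   \<union> {insert ((a, t), False) {((a', t - 1), True) | a'. a' \<in> gp_layer P (t - 1) \<and> p \<in> add P a'}
       | a t p. 2 \<le> t \<and> t \<le> T \<and> a \<in> gp_layer P t \<and> p \<in> pre P a}
   \<union> {{((a, t), False), ((b, t), False)} | a b t. 1 \<le> t \<and> t \<le> T \<and> (a, b) \<in> gp_mutex P t}"

text \<open>L0 is the centre; Br i k is L_i^k.\<close>
datatype node = L0 | Br nat nat

datatype fact = At node | Visited node

datatype act = Move node node | Noop fact

definition map_nodes :: "nat \<Rightarrow> node set" where
  "map_nodes n = {L0} \<union> {Br 1 k | k. 1 \<le> k \<and> k \<le> 2 * n - 3} \<union> {Br i 1 | i. 2 \<le> i \<and> i \<le> n}"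

text \<open>Undirected edges, as a symmetric set of ordered pairs.\<close>
definition map_edges0 :: "nat \<Rightarrow> (node \<times> node) set" where
  "map_edges0 n = {(L0, Br 1 1)} \<union> {(Br 1 k, Br 1 (k + 1)) | k. 1 \<le> k \<and> k < 2 * n - 3}
                  \<union> {(L0, Br i 1) | i. 2 \<le> i \<and> i \<le> n}"

definition map_edges :: "nat \<Rightarrow> (node \<times> node) set" where
  "map_edges n = map_edges0 n \<union> {(y, x) | x y. (x, y) \<in> map_edges0 n}"

definition map_facts :: "nat \<Rightarrow> fact set" where
  "map_facts n = At ` map_nodes n \<union> Visited ` map_nodes n"

fun map_pre :: "act \<Rightarrow> fact set" where
  "map_pre (Move x y) = {At x}"
| "map_pre (Noop p) = {p}"

fun map_add :: "act \<Rightarrow> fact set" where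
  "map_add (Move x y) = {At y, Visited y}"
| "map_add (Noop p) = {p}"

fun map_del :: "act \<Rightarrow> fact set" where
  "map_del (Move x y) = {At x}"
| "map_del (Noop p) = {}"

definition map_task :: "nat \<Rightarrow> (fact, act) strips" where
  "map_task n = \<lparr> acts = {Move x y | x y. (x, y) \<in> map_edges n} \<union> Noop ` map_facts n,
                  pre = map_pre, add = map_add, del = map_del,
                  init = {At L0},
                  goal = {Visited (Br 1 (2 * n - 3)), Visited (Br 2 1)} \<rparr>"

text \<open>The CNF formula MAP_n^{2n-3} with T = 2n-2 time steps.\<close>
definition map_cnf :: "nat \<Rightarrow> (act \<times> nat) lit set set" where
  "map_cnf n = gp_cnf (map_task n) (2 * n - 2)"

definition branch1 :: "nat \<Rightarrow> node" where
  "branch1 k = (if k = 0 then L0 else Br 1 k)"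

definition mapB :: "nat \<Rightarrow> (act \<times> nat) set" where
  "mapB n = {(Move (branch1 (2 ^ j - 2)) (branch1 (2 ^ j - 1)), 2 ^ j - 1)
             | j::nat. 1 \<le> j \<and> j \<le> nat \<lceil>log 2 (real n)\<rceil>}"

end

theory Submission
  imports Defs
begin

abbreviation PP :: "nat \<Rightarrow> (fact, act) strips" where "PP n \<equiv> map_task n"
abbreviation FF :: "nat \<Rightarrow> nat \<Rightarrow> fact set" where "FF n t \<equiv> fst (gp_facts (map_task n) t)"
abbreviation FM :: "nat \<Rightarrow> nat \<Rightarrow> (fact \<times> fact) set" where "FM n t \<equiv> snd (gp_facts (map_task n) t)"

lemma task_simps[simp]:
  "acts (map_task n) = {Move x y | x y. (x, y) \<in> map_edges n} \<union> Noop ` map_facts n"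
  "pre (map_task n) = map_pre" "add (map_task n) = map_add" "del (map_task n) = map_del"
  "init (map_task n) = {At L0}"
  "goal (map_task n) = {Visited (Br 1 (2 * n - 3)), Visited (Br 2 1)}"
  by (simp_all add: map_task_def)

lemma edge_iff: "(x, y) \<in> map_edges n \<longleftrightarrow>
   (x = L0 \<and> y = Br 1 1) \<or> (y = L0 \<and> x = Br 1 1) \<or>
   (\<exists>k. 1 \<le> k \<and> k < 2*n-3 \<and> ((x = Br 1 k \<and> y = Br 1 (k+1)) \<or> (y = Br 1 k \<and> x = Br 1 (k+1)))) \<or>
   (\<exists>i. 2 \<le> i \<and> i \<le> n \<and> ((x = L0 \<and> y = Br i 1) \<or> (y = L0 \<and> x = Br i 1)))"
  unfolding map_edges_def map_edges0_def by blast

lemma FM0_irrefl: "(p, p) \<notin> snd (gp_facts P t)"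
  by (cases t) (auto simp: Let_def)

lemma pre_single: "\<exists>p. map_pre a = {p}"
  by (cases a) auto

lemma layer_iff: "a \<in> gp_layer (map_task n) t \<longleftrightarrow> a \<in> acts (map_task n) \<and> map_pre a \<subseteq> FF n (t - 1)"
  using pre_single[of a]
  by (auto simp: gp_layer_def gp_acts_def FM0_irrefl)

lemma gp_acts_iff: "a \<in> gp_acts (map_task n) (FF n t) (FM n t) \<longleftrightarrow> a \<in> acts (map_task n) \<and> map_pre a \<subseteq> FF n t"
  using pre_single[of a]
  by (auto simp: gp_acts_def FM0_irrefl)

lemma F_Suc: "p \<in> FF n (Suc t) \<longleftrightarrow> (\<exists>a \<in> gp_layer (map_task n) (Suc t). p \<in> map_add a)"
  by (simp add: Let_def gp_layer_def)

lemma FM_Suc: "(p, q) \<in> FM n (Suc t) \<longleftrightarrow> p \<in> FF n (Suc t) \<and> q \<in> FF n (Suc t) \<and> p \<noteq> q \<and>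
   (\<forall>a \<in> gp_layer (map_task n) (Suc t). \<forall>b \<in> gp_layer (map_task n) (Suc t).
      p \<in> map_add a \<and> q \<in> map_add b \<longrightarrow> (a, b) \<in> gp_mutex (map_task n) (Suc t))"
  by (simp add: Let_def gp_layer_def gp_mutex_def)

lemma F0: "FF n 0 = {At L0}" by simp

declare gp_facts.simps(2)[simp del]

lemma layer_Suc: "a \<in> gp_layer (map_task n) (Suc t) \<longleftrightarrow> a \<in> acts (map_task n) \<and> map_pre a \<subseteq> FF n t"
  by (simp add: layer_iff)

fun d0 :: "node \<Rightarrow> nat" where
  "d0 L0 = 0" | "d0 (Br i k) = k"

fun fnode :: "fact \<Rightarrow> node" where
  "fnode (At y) = y" | "fnode (Visited y) = y"

lemma edge_d0: "(x, y) \<in> map_edges n \<Longrightarrow> d0 y \<le> d0 x + 1"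
  by (auto simp: edge_iff)

lemma F_d0: "p \<in> FF n t \<Longrightarrow> d0 (fnode p) \<le> t"
proof (induction t arbitrary: p)
  case 0 then show ?case by simp
next
  case (Suc t)
  then obtain a where a: "a \<in> gp_layer (map_task n) (Suc t)" "p \<in> map_add a" by (auto simp: F_Suc)
  show ?case
  proof (cases a)
    case (Move x y)
    with a have "(x, y) \<in> map_edges n" "At x \<in> FF n t" by (auto simp: layer_Suc)
    with Suc.IH[of "At x"] edge_d0[of x y n] a Move show ?thesis by auto
  next
    case (Noop q)
    with a Suc.IH[of p] show ?thesis by (auto simp: layer_Suc)
  qed
qed


lemma branch1_Suc: "branch1 (Suc k) = Br 1 (Suc k)" by (simp add: branch1_def)

lemma branch1_node: "k \<le> 2*n-3 \<Longrightarrow> branch1 k \<in> map_nodes n"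
  by (auto simp: branch1_def map_nodes_def)

lemma branch1_edge: "(branch1 k, branch1 (k+1)) \<in> map_edges n" if "k + 1 \<le> 2*n-3"
proof (cases k)
  case 0 then show ?thesis using that by (simp add: edge_iff branch1_def)
next
  case (Suc j)
  then show ?thesis using that unfolding edge_iff branch1_def
    by (intro disjI2 disjI2 disjI1 exI[of _ k]) auto
qed

lemma At_branch_in_F: "k \<le> t \<Longrightarrow> k \<le> 2*n-3 \<Longrightarrow> At (branch1 k) \<in> FF n t"
proof (induction t arbitrary: k)
  case 0 then show ?case by (simp add: branch1_def)
next
  case (Suc t)
  show ?case
  proof (cases "k \<le> t")
    case True
    hence "Noop (At (branch1 k)) \<in> gp_layer (map_task n) (Suc t)"
      using Suc by (auto simp: layer_Suc map_facts_def branch1_node)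
    then show ?thesis unfolding F_Suc by (intro bexI[of _ "Noop (At (branch1 k))"]) auto
  next
    case False
    hence k: "k = Suc t" using Suc by auto
    have "Move (branch1 t) (branch1 k) \<in> gp_layer (map_task n) (Suc t)"
      using Suc k branch1_edge[of t n] by (auto simp: layer_Suc)
    then show ?thesis by (auto simp: F_Suc intro!: bexI[of _ "Move (branch1 t) (branch1 k)"])
  qed
qed

lemma edge_into_Br1: "(x, Br 1 i) \<in> map_edges n \<Longrightarrow> x = branch1 (i - 1) \<or> x = Br 1 (i + 1)"
  by (auto simp: edge_iff branch1_def)

lemma edge_into_Br2: "(x, Br 2 1) \<in> map_edges n \<Longrightarrow> x = L0"
  by (auto simp: edge_iff)

lemma tight_support:
  assumes "a \<in> gp_layer (map_task n) (Suc t)" "q \<in> map_add a" "d0 (fnode q) = Suc t"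
  shows "\<exists>x. a = Move x (fnode q) \<and> (x, fnode q) \<in> map_edges n \<and> d0 x = t"
proof (cases a)
  case (Move x y)
  with assms have "(x, y) \<in> map_edges n" "At x \<in> FF n t" by (auto simp: layer_Suc)
  with F_d0[of "At x" n t] edge_d0[of x y n] assms Move show ?thesis by auto
next
  case (Noop p)
  with assms F_d0[of q n t] show ?thesis by (auto simp: layer_Suc)
qed

lemma straight_support:
  assumes "a \<in> gp_layer (map_task n) (Suc i)" "q \<in> map_add a" "q = At (branch1 (Suc i)) \<or> q = Visited (branch1 (Suc i))"
  shows "a = Move (branch1 i) (branch1 (Suc i))"
proof -
  from assms have "d0 (fnode q) = Suc i" by (auto simp: branch1_def)
  from tight_support[OF assms(1,2) this] obtain x where
    x: "a = Move x (fnode q)" "(x, fnode q) \<in> map_edges n" "d0 x = i" by blast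
  have fq: "fnode q = Br 1 (Suc i)" using assms(3) by (auto simp: branch1_def)
  from edge_into_Br1[of x "Suc i" n] x fq have "x = branch1 i \<or> x = Br 1 (Suc i + 1)" by simp
  moreover have "x \<noteq> Br 1 (Suc i + 1)"
  proof
    assume "x = Br 1 (Suc i + 1)"
    hence "d0 x = Suc i + 1" by simp
    with x(3) show False by simp
  qed
  ultimately have "x = branch1 i" by blast
  with x fq show ?thesis by (auto simp: branch1_def)
qed

lemma straight_in_layer: "k < t \<Longrightarrow> k + 1 \<le> 2*n-3 \<Longrightarrow> Move (branch1 k) (branch1 (k+1)) \<in> gp_layer (map_task n) t"
  using At_branch_in_F[of k "t-1" n] branch1_edge[of k n] by (auto simp: layer_iff)

lemma V_support: "a \<in> acts (map_task n) \<Longrightarrow> Visited (Br 2 1) \<in> map_add a \<Longrightarrow> a = Move L0 (Br 2 1) \<or> a = Noop (Visited (Br 2 1))"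
  by (cases a) (auto simp: edge_iff)

lemma V_support_end: "a \<in> acts (map_task n) \<Longrightarrow> Visited (Br 1 (2*n-3)) \<in> map_add a \<Longrightarrow> 
   a = Move (branch1 (2*n-4)) (Br 1 (2*n-3)) \<or> a = Noop (Visited (Br 1 (2*n-3)))"
  apply (cases a)
   apply (auto simp: edge_iff branch1_def)
  done

fun isAt :: "act \<Rightarrow> bool" where
  "isAt (Move x y) = True" | "isAt (Noop (At y)) = True" | "isAt (Noop (Visited y)) = False"

definition inv1 :: "nat \<Rightarrow> nat \<Rightarrow> bool" where
  "inv1 n t \<longleftrightarrow> (\<forall>x y. At x \<in> FF n t \<longrightarrow> At y \<in> FF n t \<longrightarrow> x \<noteq> y \<longrightarrow> (At x, At y) \<in> FM n t)"

lemma M1_gen: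
  assumes inv: "inv1 n t"
    and a: "a \<in> gp_acts (map_task n) (FF n t) (FM n t)" and b: "b \<in> gp_acts (map_task n) (FF n t) (FM n t)"
    and ab: "a \<noteq> b" and ia: "isAt a" and ib: "isAt b"
  shows "(a, b) \<in> gp_act_mutex (map_task n) (FF n t) (FM n t)"
proof -
  obtain x where x: "map_pre a = {At x}" using ia by (cases a rule: isAt.cases) auto
  obtain y where y: "map_pre b = {At y}" using ib by (cases b rule: isAt.cases) auto
  have xF: "At x \<in> FF n t" and yF: "At y \<in> FF n t" using a b x y by (auto simp: gp_acts_iff)
  show ?thesis
  proof (cases "x = y")
    case False
    with inv xF yF have "(At x, At y) \<in> FM n t" by (auto simp: inv1_def)
    with a b ab x y show ?thesis by (auto simp: gp_act_mutex_def)
  next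
    case True
    have "interfere (map_task n) a b"
    proof (cases a)
      case (Move u v)
      with x y True show ?thesis by (auto simp: interfere_def)
    next
      case (Noop p)
      with x have p: "p = At x" by simp
      show ?thesis
      proof (cases b)
        case (Move u v)
        with x y True show ?thesis by (auto simp: interfere_def)
      next
        case (Noop q)
        with y True p \<open>a = Noop p\<close> ab show ?thesis by simp
      qed
    qed
    with a b ab show ?thesis by (auto simp: gp_act_mutex_def)
  qed
qed

lemma add_At_isAt: "At y \<in> map_add a \<Longrightarrow> isAt a"
  by (cases a rule: isAt.cases) auto

lemma add_At_cases: "At y \<in> map_add a \<Longrightarrow> (\<exists>x. a = Move x y) \<or> a = Noop (At y)"
  by (cases a) auto

lemma inv1_all: "inv1 n t"
proof (induction t)
  case 0 then show ?case by (simp add: inv1_def)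
next
  case (Suc t)
  show ?case unfolding inv1_def
  proof (intro allI impI)
    fix x y assume xF: "At x \<in> FF n (Suc t)" and yF: "At y \<in> FF n (Suc t)" and xy: "x \<noteq> y"
    have "(a, b) \<in> gp_mutex (map_task n) (Suc t)"
      if "a \<in> gp_layer (map_task n) (Suc t)" "b \<in> gp_layer (map_task n) (Suc t)"
         "At x \<in> map_add a" "At y \<in> map_add b" for a b
    proof -
      have "a \<noteq> b"
      proof
        assume "a = b"
        with that(3,4) xy show False by (cases a) auto
      qed
      with M1_gen[OF Suc.IH, of a b] that add_At_isAt[of x a] add_At_isAt[of y b]
      show ?thesis by (simp add: gp_mutex_def gp_layer_def)
    qed
    with xF yF xy show "(At x, At y) \<in> FM n (Suc t)" by (auto simp: FM_Suc)
  qed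
qed

lemma M1:
  assumes "1 \<le> t" "a \<in> gp_layer (map_task n) t" "b \<in> gp_layer (map_task n) t" "a \<noteq> b" "isAt a" "isAt b"
  shows "(a, b) \<in> gp_mutex (map_task n) t"
  using M1_gen[OF inv1_all[of n "t-1"], of a b] assms by (simp add: gp_mutex_def gp_layer_def)

fun dB :: "node \<Rightarrow> nat" where
  "dB L0 = 1" | "dB (Br i k) = (if i = 1 then k + 1 else if i = 2 then 0 else 2)"

lemma edge_dB: "(x, y) \<in> map_edges n \<Longrightarrow> dB y \<le> dB x + 1"
  by (auto simp: edge_iff)

lemma Move_Br2_layer: "2 \<le> n \<Longrightarrow> 1 \<le> t \<Longrightarrow> Move L0 (Br 2 1) \<in> gp_layer (map_task n) t"
  using At_branch_in_F[of 0 "t-1" n] by (auto simp: layer_iff edge_iff branch1_def)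

lemma V2_in_F: "2 \<le> n \<Longrightarrow> 1 \<le> t \<Longrightarrow> Visited (Br 2 1) \<in> FF n t"
proof -
  assume a: "2 \<le> n" "1 \<le> t"
  then have "Move L0 (Br 2 1) \<in> gp_layer (map_task n) (Suc (t-1))" using Move_Br2_layer[of n t] by simp
  then have "Visited (Br 2 1) \<in> FF n (Suc (t-1))" unfolding F_Suc by (intro bexI) auto
  with a show ?thesis by simp
qed

definition inv2 :: "nat \<Rightarrow> nat \<Rightarrow> bool" where
  "inv2 n t \<longleftrightarrow> (1 \<le> t \<longrightarrow> (\<forall>y. At y \<in> FF n t \<longrightarrow> t \<le> dB y \<longrightarrow> (Visited (Br 2 1), At y) \<in> FM n t))"

lemma inv2_all: assumes n2: "2 \<le> n" shows "inv2 n t"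
proof (induction t)
  case 0 then show ?case by (simp add: inv2_def)
next
  case (Suc t)
  show ?case unfolding inv2_def
  proof (intro allI impI)
    fix y assume yF: "At y \<in> FF n (Suc t)" and dy: "Suc t \<le> dB y"
    have mut: "(a, b) \<in> gp_mutex (map_task n) (Suc t)"
      if la: "a \<in> gp_layer (map_task n) (Suc t)" and lb: "b \<in> gp_layer (map_task n) (Suc t)"
         and aV: "Visited (Br 2 1) \<in> map_add a" and bA: "At y \<in> map_add b" for a b
    proof -
      have aacts: "a \<in> acts (map_task n)" using la by (simp add: layer_Suc)
      from V_support[OF aacts aV] show ?thesis
      proof
        assume a: "a = Move L0 (Br 2 1)"
        have "a \<noteq> b"
        proof
          assume "a = b" with a bA dy show False by auto
        qed
        then show ?thesis using M1[of "Suc t" a n b] la lb a add_At_isAt[OF bA] by simp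
      next
        assume a: "a = Noop (Visited (Br 2 1))"
        with la have "Visited (Br 2 1) \<in> FF n t" by (simp add: layer_Suc)
        from F_d0[OF this] have t1: "1 \<le> t" by simp
        obtain x where bx: "map_pre b = {At x}" and dx: "t \<le> dB x"
        proof (cases "\<exists>x. b = Move x y")
          case True
          then obtain x where b: "b = Move x y" by blast
          with lb have "(x, y) \<in> map_edges n" by (auto simp: layer_Suc)
          from edge_dB[OF this] dy have "t \<le> dB x" by simp
          with b that show thesis by simp
        next
          case False
          with add_At_cases[OF bA] have "b = Noop (At y)" by blast
          with dy that show thesis by simp
        qed
        from lb bx have xF: "At x \<in> FF n t" by (simp add: layer_Suc)
        with Suc.IH t1 dx have fm: "(Visited (Br 2 1), At x) \<in> FM n t" by (simp add: inv2_def)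
        have "map_pre a \<noteq> map_pre b" using a bx by simp
        hence "a \<noteq> b" by blast
        have "\<exists>p \<in> map_pre a. \<exists>q \<in> map_pre b. (p, q) \<in> FM n t" using fm a bx by simp
        with \<open>a \<noteq> b\<close> la lb show ?thesis
          unfolding gp_mutex_def gp_act_mutex_def gp_layer_def by simp
      qed
    qed
    have VF: "Visited (Br 2 1) \<in> FF n (Suc t)" using V2_in_F[OF n2, of "Suc t"] by simp
    show "(Visited (Br 2 1), At y) \<in> FM n (Suc t)" unfolding FM_Suc
    proof (intro conjI ballI impI)
      show "Visited (Br 2 1) \<in> FF n (Suc t)" by (rule VF)
      show "At y \<in> FF n (Suc t)" by (rule yF)
      show "Visited (Br 2 1) \<noteq> At y" by simp
      fix a b assume "a \<in> gp_layer (map_task n) (Suc t)" "b \<in> gp_layer (map_task n) (Suc t)"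
        "Visited (Br 2 1) \<in> map_add a \<and> At y \<in> map_add b"
      then show "(a, b) \<in> gp_mutex (map_task n) (Suc t)" using mut by blast
    qed
  qed
qed

section \<open>Unit propagation helpers\<close>

lemma cnf_pre: "2 \<le> t \<Longrightarrow> t \<le> 2*n-2 \<Longrightarrow> a \<in> gp_layer (map_task n) t \<Longrightarrow> p \<in> map_pre a \<Longrightarrow>
  insert ((a, t), False) {((a', t - 1), True) | a'. a' \<in> gp_layer (map_task n) (t - 1) \<and> p \<in> map_add a'} \<in> map_cnf n"
  unfolding map_cnf_def gp_cnf_def by (intro UnI1 UnI2) auto

lemma cnf_goal: "g \<in> goal (map_task n) \<Longrightarrow>
  {((a, 2*n-2), True) | a. a \<in> gp_layer (map_task n) (2*n-2) \<and> g \<in> map_add a} \<in> map_cnf n"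
  unfolding map_cnf_def gp_cnf_def by (intro UnI1) auto

lemma cnf_mutex: "1 \<le> t \<Longrightarrow> t \<le> 2*n-2 \<Longrightarrow> (a, b) \<in> gp_mutex (map_task n) t \<Longrightarrow>
  {((a, t), False), ((b, t), False)} \<in> map_cnf n"
  unfolding map_cnf_def gp_cnf_def by (intro UnI2) auto

lemma unitI: "C \<in> F \<Longrightarrow> l \<in> C \<Longrightarrow> (\<And>m. m \<in> C \<Longrightarrow> m \<noteq> l \<Longrightarrow> neg m \<in> up_lits F S0) \<Longrightarrow> l \<in> up_lits F S0"
  by (rule up_lits.unit) auto

lemma negPre:
  assumes "2 \<le> t" "t \<le> 2*n-2" "a \<in> gp_layer (map_task n) t" "p \<in> map_pre a"
    and "\<And>a'. a' \<in> gp_layer (map_task n) (t - 1) \<Longrightarrow> p \<in> map_add a' \<Longrightarrow> ((a', t - 1), False) \<in> up_lits (map_cnf n) S0"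
  shows "((a, t), False) \<in> up_lits (map_cnf n) S0"
proof (rule unitI[OF cnf_pre[OF assms(1-4)]])
  fix m assume m: "m \<in> insert ((a, t), False) {((a', t - 1), True) | a'. a' \<in> gp_layer (map_task n) (t - 1) \<and> p \<in> map_add a'}"
    "m \<noteq> ((a, t), False)"
  then obtain a' where "m = ((a', t - 1), True)" "a' \<in> gp_layer (map_task n) (t - 1)" "p \<in> map_add a'" by blast
  with assms(5)[of a'] show "neg m \<in> up_lits (map_cnf n) S0" by (simp add: neg_def)
qed simp

lemma posPre:
  assumes "2 \<le> t" "t \<le> 2*n-2" "a \<in> gp_layer (map_task n) t" "p \<in> map_pre a"
    and "((a, t), True) \<in> up_lits (map_cnf n) S0"
    and "b \<in> gp_layer (map_task n) (t - 1)" "p \<in> map_add b"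
    and "\<And>a'. a' \<in> gp_layer (map_task n) (t - 1) \<Longrightarrow> p \<in> map_add a' \<Longrightarrow> a' \<noteq> b \<Longrightarrow> ((a', t - 1), False) \<in> up_lits (map_cnf n) S0"
  shows "((b, t - 1), True) \<in> up_lits (map_cnf n) S0"
proof (rule unitI[OF cnf_pre[OF assms(1-4)]])
  show "((b, t - 1), True) \<in> insert ((a, t), False) {((a', t - 1), True) | a'. a' \<in> gp_layer (map_task n) (t - 1) \<and> p \<in> map_add a'}"
    using assms(6,7) by blast
  fix m assume m: "m \<in> insert ((a, t), False) {((a', t - 1), True) | a'. a' \<in> gp_layer (map_task n) (t - 1) \<and> p \<in> map_add a'}"
    "m \<noteq> ((b, t - 1), True)"
  show "neg m \<in> up_lits (map_cnf n) S0"
  proof (cases "m = ((a, t), False)")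
    case True with assms(5) show ?thesis by (simp add: neg_def)
  next
    case False
    with m obtain a' where "m = ((a', t - 1), True)" "a' \<in> gp_layer (map_task n) (t - 1)" "p \<in> map_add a'" "a' \<noteq> b" by blast
    with assms(8)[of a'] show ?thesis by (simp add: neg_def)
  qed
qed

lemma negMutex:
  assumes "1 \<le> t" "t \<le> 2*n-2" "(a, b) \<in> gp_mutex (map_task n) t \<or> (b, a) \<in> gp_mutex (map_task n) t"
    and "((a, t), True) \<in> up_lits (map_cnf n) S0"
  shows "((b, t), False) \<in> up_lits (map_cnf n) S0"
proof -
  have "{((a, t), False), ((b, t), False)} \<in> map_cnf n \<or> {((b, t), False), ((a, t), False)} \<in> map_cnf n"
    using assms(3) cnf_mutex[OF assms(1,2)] by blast
  hence C: "{((a, t), False), ((b, t), False)} \<in> map_cnf n" by (simp add: insert_commute)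
  show ?thesis by (rule unitI[OF C]) (auto simp: neg_def assms(4))
qed

lemma log_facts:
  fixes n :: nat assumes "2 \<le> n"
  shows "1 \<le> nat \<lceil>log 2 (real n)\<rceil>" "n \<le> 2 ^ nat \<lceil>log 2 (real n)\<rceil>" "2 ^ (nat \<lceil>log 2 (real n)\<rceil> - 1) < n"
proof -
  define c where "c = \<lceil>log 2 (real n)\<rceil>"
  have l1: "1 \<le> log 2 (real n)" using assms by simp
  hence c1: "1 \<le> c" unfolding c_def by linarith
  hence "1 \<le> nat c" by simp
  then show "1 \<le> nat \<lceil>log 2 (real n)\<rceil>" using c_def by simp
  have rc: "real (nat c) = real_of_int c" using c1 by simp
  have "log 2 (real n) \<le> real (nat c)" using rc c_def by simp
  hence "real n \<le> 2 powr real (nat c)" using assms by (simp add: log_le_iff)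
  hence "real n \<le> 2 ^ nat c" by (simp add: powr_realpow)
  then show "n \<le> 2 ^ nat \<lceil>log 2 (real n)\<rceil>" unfolding c_def by (metis of_nat_le_iff of_nat_numeral of_nat_power)
  have "real (nat c - 1) < log 2 (real n)" using rc c1 unfolding c_def by linarith
  hence "2 powr real (nat c - 1) < real n" using assms by (simp add: less_log_iff)
  hence "real (2 ^ (nat c - 1)) < real n" by (simp add: powr_realpow)
  then show "2 ^ (nat \<lceil>log 2 (real n)\<rceil> - 1) < n" unfolding c_def by linarith
qed

fun dS :: "nat \<Rightarrow> node \<Rightarrow> nat" where
  "dS s L0 = s" | "dS s (Br i k) = (if i = 1 then (if s \<le> k then k - s else s - k) else s + 1)"

lemma edge_dS: "(x, y) \<in> map_edges n \<Longrightarrow> dS s y \<le> dS s x + 1"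
  unfolding edge_iff
  apply (elim disjE exE conjE)
  apply (auto split: if_splits)
  done

lemma conflictI: "C \<in> F \<Longrightarrow> (\<And>m. m \<in> C \<Longrightarrow> neg m \<in> up_lits F S0) \<Longrightarrow> up_conflict F S0"
  unfolding up_conflict_def by blast

theorem theorem9:
  fixes n :: nat
  assumes "n \<ge> 2"
  shows "backdoor (map_cnf n) (mapB n)"
  unfolding backdoor_def
proof
  fix \<alpha> :: "act \<times> nat \<Rightarrow> bool"
  have n2: "2 \<le> n" using assms .
  define S0 where "S0 = {(v, \<alpha> v) | v. v \<in> mapB n}"
  define U where "U = up_lits (map_cnf n) S0"
  define m where "m = nat \<lceil>log 2 (real n)\<rceil>"
  define s where "s = (2::nat) ^ m - 1"
  have m1: "1 \<le> m" and nm: "n \<le> 2 ^ m" and mn: "2 ^ (m - 1) < n"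
    using log_facts[OF n2] unfolding m_def by auto
  have pm: "(2::nat) ^ m = 2 * 2 ^ (m - 1)" using m1 by (cases m) auto
  have "(2::nat) ^ 1 \<le> 2 ^ m" using m1 by (rule power_increasing) simp
  hence s1: "1 \<le> s" unfolding s_def by simp
  have sT: "s \<le> 2*n-3" unfolding s_def using pm mn by linarith
  have Ts: "2*n-2 \<le> 2*s" unfolding s_def using nm by linarith
  define st where "st t = Move (branch1 (t - 1)) (branch1 t)" for t
  have tvB: "(st s, s) \<in> mapB n"
  proof -
    have "s - 1 = 2 ^ m - 2" unfolding s_def by simp
    then show ?thesis unfolding mapB_def st_def using m1 by (auto simp: s_def m_def intro!: exI[of _ m])
  qed
  have st_layer: "st t \<in> gp_layer (map_task n) t" if "1 \<le> t" "t \<le> 2*n-3" for t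
    using straight_in_layer[of "t-1" t n] that by (simp add: st_def)
  have st_supp: "a = st t" if "1 \<le> t" "a \<in> gp_layer (map_task n) t" "At (branch1 t) \<in> map_add a" for t a
    using straight_support[of a n "t-1" "At (branch1 t)"] that by (simp add: st_def)
  have st_pre: "map_pre (st t) = {At (branch1 (t - 1))}" for t by (simp add: st_def)
  have key: "((a, 2*n-2), False) \<in> U"
    if aT: "a \<in> gp_layer (map_task n) (2*n-2)" and aV: "Visited (Br 2 1) \<in> map_add a" for a
  proof (cases "\<alpha> (st s, s)")
    case False
    have base: "((st s, s), False) \<in> U" unfolding U_def
      by (rule up_lits.base) (use tvB False in \<open>auto simp: S0_def\<close>)
    have B1: "((st (s + d), s + d), False) \<in> U" if "s + d \<le> 2*n-3" for d
      using that
    proof (induction d)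
      case 0 then show ?case using base by simp
    next
      case (Suc d)
      have "((st (s + Suc d), s + Suc d), False) \<in> up_lits (map_cnf n) S0"
      proof (rule negPre[of "s + Suc d" n "st (s + Suc d)" "At (branch1 (s + d))"])
        show "2 \<le> s + Suc d" using s1 by simp
        show "s + Suc d \<le> 2*n-2" using Suc.prems by simp
        show "st (s + Suc d) \<in> gp_layer (map_task n) (s + Suc d)" using st_layer Suc.prems by simp
        show "At (branch1 (s + d)) \<in> map_pre (st (s + Suc d))" by (simp add: st_pre)
        fix a' assume "a' \<in> gp_layer (map_task n) (s + Suc d - 1)" "At (branch1 (s + d)) \<in> map_add a'"
        then have "a' = st (s + d)" using st_supp[of "s + d" a'] s1 by simp
        then show "((a', s + Suc d - 1), False) \<in> up_lits (map_cnf n) S0"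
          using Suc.IH Suc.prems by (simp add: U_def)
      qed
      then show ?case by (simp add: U_def)
    qed
    have "s + (2*n-3-s) = 2*n-3" using sT by simp
    then have stend: "((st (2*n-3), 2*n-3), False) \<in> U" using B1[of "2*n-3-s"] by simp
    have bend: "branch1 (2*n-3) = Br 1 (2*n-3)" using n2 by (simp add: branch1_def)
    have B2: "((Noop (Visited (Br 1 (2*n-3))), 2*n-2), False) \<in> U"
      if "Noop (Visited (Br 1 (2*n-3))) \<in> gp_layer (map_task n) (2*n-2)"
      unfolding U_def
    proof (rule negPre[OF _ _ that, of "Visited (Br 1 (2*n-3))"])
      show "2 \<le> 2*n-2" using n2 by simp
      show "2*n-2 \<le> 2*n-2" by simp
      show "Visited (Br 1 (2*n-3)) \<in> map_pre (Noop (Visited (Br 1 (2*n-3))))" by simp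
      fix a' assume a': "a' \<in> gp_layer (map_task n) (2*n-2-1)" "Visited (Br 1 (2*n-3)) \<in> map_add a'"
      have e: "2*n-2-1 = Suc (2*n-4)" "Suc (2*n-4) = 2*n-3" using n2 by auto
      have "a' = Move (branch1 (2*n-4)) (branch1 (Suc (2*n-4)))"
        using straight_support[of a' n "2*n-4" "Visited (branch1 (Suc (2*n-4)))"] a' e bend by simp
      then have "a' = st (2*n-3)" using e by (simp add: st_def)
      then show "((a', 2*n-2-1), False) \<in> up_lits (map_cnf n) S0" using stend e by (simp add: U_def)
    qed
    define mv where "mv = st (2*n-3)"
    have e3: "Suc (2*n-4) = 2*n-3" "2*n-3-1 = 2*n-4" using n2 by auto
    have mv_layer: "mv \<in> gp_layer (map_task n) (2*n-2)"
      using straight_in_layer[of "2*n-4" "2*n-2" n] n2 e3 by (simp add: mv_def st_def)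
    have mv_eq: "mv = Move (branch1 (2*n-4)) (Br 1 (2*n-3))"
      using n2 bend by (simp add: mv_def st_def)
    have B3: "((mv, 2*n-2), True) \<in> U" unfolding U_def
    proof (rule unitI[OF cnf_goal[of "Visited (Br 1 (2*n-3))" n]])
      show "Visited (Br 1 (2*n-3)) \<in> goal (map_task n)" by simp
      show "((mv, 2*n-2), True) \<in> {((a, 2*n-2), True) | a. a \<in> gp_layer (map_task n) (2*n-2) \<and> Visited (Br 1 (2*n-3)) \<in> map_add a}"
        using mv_layer mv_eq by auto
      fix l assume l: "l \<in> {((a, 2*n-2), True) | a. a \<in> gp_layer (map_task n) (2*n-2) \<and> Visited (Br 1 (2*n-3)) \<in> map_add a}"
        "l \<noteq> ((mv, 2*n-2), True)"
      then obtain b where b: "l = ((b, 2*n-2), True)" "b \<in> gp_layer (map_task n) (2*n-2)" "Visited (Br 1 (2*n-3)) \<in> map_add b" "b \<noteq> mv"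
        by blast
      from b(2) have "b \<in> acts (map_task n)" by (simp add: layer_iff)
      from V_support_end[OF this b(3)] b(4) mv_eq have "b = Noop (Visited (Br 1 (2*n-3)))" by auto
      with B2 b show "neg l \<in> up_lits (map_cnf n) S0" by (simp add: neg_def U_def)
    qed
    have T1: "1 \<le> 2*n-2" "2*n-2 \<le> 2*n-2" using n2 by auto
    from aT have "a \<in> acts (map_task n)" by (simp add: layer_iff)
    from V_support[OF this aV] show ?thesis
    proof
      assume a: "a = Move L0 (Br 2 1)"
      have "a \<noteq> mv" using a mv_eq by (simp add: branch1_def)
      hence "(mv, a) \<in> gp_mutex (map_task n) (2*n-2)" using M1[OF T1(1) mv_layer aT] a mv_eq by simp
      with B3 show ?thesis unfolding U_def using negMutex[OF T1] by blast
    next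
      assume a: "a = Noop (Visited (Br 2 1))"
      have e: "2*n-2-1 = 2*n-3" by simp
      have "inv2 n (2*n-3)" using inv2_all[OF n2] .
      moreover have "At (branch1 (2*n-4)) \<in> FF n (2*n-3)" using At_branch_in_F[of "2*n-4" "2*n-3" n] by simp
      moreover have "2*n-3 \<le> dB (branch1 (2*n-4))" using n2 by (simp add: branch1_def; linarith)
      moreover have "1 \<le> 2*n-3" using n2 by simp
      ultimately have fm: "(Visited (Br 2 1), At (branch1 (2*n-4))) \<in> FM n (2*n-3)" by (simp add: inv2_def)
      have "(a, mv) \<in> gp_mutex (map_task n) (2*n-2)"
        using aT mv_layer fm a mv_eq unfolding gp_mutex_def gp_act_mutex_def gp_layer_def e by auto
      with B3 show ?thesis unfolding U_def using negMutex[OF T1] by blast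
    qed
  next
    case True
    have base: "((st s, s), True) \<in> U" unfolding U_def
      by (rule up_lits.base) (use tvB True in \<open>auto simp: S0_def\<close>)
    have A1: "((st (s - d), s - d), True) \<in> U" if "d < s" for d
      using that
    proof (induction d)
      case 0 then show ?case using base by simp
    next
      case (Suc d)
      define t where "t = s - d"
      have t2: "2 \<le> t" using Suc.prems by (simp add: t_def)
      have tm: "t - 1 = s - Suc d" by (simp add: t_def)
      have "((st (t - 1), t - 1), True) \<in> up_lits (map_cnf n) S0"
      proof (rule posPre[of t n "st t" "At (branch1 (t - 1))"])
        show "2 \<le> t" by fact
        show "t \<le> 2*n-2" using sT by (simp add: t_def)
        show "st t \<in> gp_layer (map_task n) t" using st_layer t2 sT by (simp add: t_def)
        show "At (branch1 (t - 1)) \<in> map_pre (st t)" by (simp add: st_pre)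
        show "((st t, t), True) \<in> up_lits (map_cnf n) S0" using Suc t_def by (simp add: U_def)
        show "st (t - 1) \<in> gp_layer (map_task n) (t - 1)" using st_layer t2 sT by (simp add: t_def)
        show "At (branch1 (t - 1)) \<in> map_add (st (t - 1))" by (simp add: st_def)
        fix a' assume "a' \<in> gp_layer (map_task n) (t - 1)" "At (branch1 (t - 1)) \<in> map_add a'" "a' \<noteq> st (t - 1)"
        with st_supp[of "t - 1" a'] t2 show "((a', t - 1), False) \<in> up_lits (map_cnf n) S0" by simp
      qed
      then show ?case using tm by (simp add: U_def)
    qed
    have A1': "((st t, t), True) \<in> U" if "1 \<le> t" "t \<le> s" for t
      using A1[of "s - t"] that by simp
    have T1: "1 \<le> 2*n-2" using n2 by simp
    have A2: "((Move L0 (Br 2 1), t), False) \<in> U"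
      if "1 \<le> t" "t \<le> s" "Move L0 (Br 2 1) \<in> gp_layer (map_task n) t" for t
    proof -
      have "st t \<noteq> Move L0 (Br 2 1)" using that by (simp add: st_def branch1_def)
      hence "(st t, Move L0 (Br 2 1)) \<in> gp_mutex (map_task n) t"
        using M1[of t "st t" n "Move L0 (Br 2 1)"] that st_layer[of t] sT by (simp add: st_def)
      have "t \<le> 2*n-2" using that sT by simp
      from negMutex[OF that(1) this] \<open>(st t, Move L0 (Br 2 1)) \<in> gp_mutex (map_task n) t\<close> A1'[OF that(1,2)]
      show ?thesis unfolding U_def by blast
    qed
    have A3: "((a, s + d), False) \<in> U"
      if "s + d \<le> 2*n-2" "a \<in> gp_layer (map_task n) (s + d)" "At y \<in> map_add a" "d < dS s y" for d a y
      using that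
    proof (induction d arbitrary: a y)
      case 0
      have bs: "branch1 s = Br 1 s" using s1 by (simp add: branch1_def)
      have "a \<noteq> st s"
      proof
        assume "a = st s"
        with 0 bs show False by (simp add: st_def)
      qed
      hence "(st s, a) \<in> gp_mutex (map_task n) s"
        using M1[of s "st s" n a] 0 st_layer[of s] s1 sT add_At_isAt[of y a] by (simp add: st_def)
      with A1'[of s] s1 show ?case unfolding U_def
        using negMutex[of s n "st s" a] sT by simp
    next
      case (Suc d)
      have t2: "2 \<le> s + Suc d" using s1 by simp
      have tm: "s + Suc d - 1 = s + d" by simp
      obtain x where px: "map_pre a = {At x}" and dx: "d < dS s x"
      proof (cases "\<exists>x. a = Move x y")
        case True
        then obtain x where ax: "a = Move x y" by blast
        with Suc.prems have "(x, y) \<in> map_edges n" by (auto simp: layer_iff)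
        from edge_dS[OF this, of s] Suc.prems have "d < dS s x" by simp
        with ax that show thesis by simp
      next
        case False
        with add_At_cases[OF Suc.prems(3)] have "a = Noop (At y)" by blast
        with Suc.prems that show thesis by simp
      qed
      have "((a, s + Suc d), False) \<in> up_lits (map_cnf n) S0"
      proof (rule negPre[OF t2 Suc.prems(1,2), of "At x"])
        show "At x \<in> map_pre a" using px by simp
        fix a' assume "a' \<in> gp_layer (map_task n) (s + Suc d - 1)" "At x \<in> map_add a'"
        with Suc.IH[of a' x] Suc.prems dx show "((a', s + Suc d - 1), False) \<in> up_lits (map_cnf n) S0"
          by (simp add: U_def)
      qed
      then show ?case by (simp add: U_def)
    qed
    have A4: "((Move L0 (Br 2 1), t), False) \<in> U"
      if "1 \<le> t" "t \<le> 2*n-2" "Move L0 (Br 2 1) \<in> gp_layer (map_task n) t" for t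
    proof (cases "t \<le> s")
      case True with A2 that show ?thesis by simp
    next
      case False
      define d where "d = t - 1 - s"
      have t2: "2 \<le> t" using False s1 by simp
      have "((Move L0 (Br 2 1), t), False) \<in> up_lits (map_cnf n) S0"
      proof (rule negPre[OF t2 that(2,3), of "At L0"])
        show "At L0 \<in> map_pre (Move L0 (Br 2 1))" by simp
        fix a' assume a': "a' \<in> gp_layer (map_task n) (t - 1)" "At L0 \<in> map_add a'"
        have e: "t - 1 = s + d" using False by (simp add: d_def)
        have "d < dS s L0" using False that(2) Ts by (simp add: d_def)
        with A3[of d a' L0] a' e that(2) show "((a', t - 1), False) \<in> up_lits (map_cnf n) S0"
          by (simp add: U_def)
      qed
      then show ?thesis by (simp add: U_def)
    qed
    have A5: "((Noop (Visited (Br 2 1)), t), False) \<in> U"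
      if "t \<le> 2*n-2" "Noop (Visited (Br 2 1)) \<in> gp_layer (map_task n) t" for t
      using that
    proof (induction t)
      case 0 then show ?case by (simp add: layer_iff)
    next
      case (Suc t)
      show ?case
      proof (cases "t = 0")
        case True with Suc.prems show ?thesis by (simp add: layer_iff)
      next
        case False
        hence t2: "2 \<le> Suc t" by simp
        have "((Noop (Visited (Br 2 1)), Suc t), False) \<in> up_lits (map_cnf n) S0"
        proof (rule negPre[OF t2 Suc.prems, of "Visited (Br 2 1)"])
          show "Visited (Br 2 1) \<in> map_pre (Noop (Visited (Br 2 1)))" by simp
          fix a' assume a': "a' \<in> gp_layer (map_task n) (Suc t - 1)" "Visited (Br 2 1) \<in> map_add a'"
          hence "a' \<in> acts (map_task n)" by (simp add: layer_iff)
          from V_support[OF this a'(2)] have "((a', t), False) \<in> U"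
          proof
            assume "a' = Move L0 (Br 2 1)"
            with A4[of t] a' False Suc.prems show ?thesis by simp
          next
            assume "a' = Noop (Visited (Br 2 1))"
            with Suc.IH a' Suc.prems show ?thesis by simp
          qed
          then show "((a', Suc t - 1), False) \<in> up_lits (map_cnf n) S0" by (simp add: U_def)
        qed
        then show ?thesis by (simp add: U_def)
      qed
    qed
    from aT have "a \<in> acts (map_task n)" by (simp add: layer_iff)
    from V_support[OF this aV] show ?thesis
    proof
      assume "a = Move L0 (Br 2 1)"
      with A4[of "2*n-2"] aT T1 show ?thesis by simp
    next
      assume "a = Noop (Visited (Br 2 1))"
      with A5[of "2*n-2"] aT show ?thesis by simp
    qed
  qed
  show "up_conflict (map_cnf n) S0"
  proof (rule conflictI[OF cnf_goal[of "Visited (Br 2 1)" n]])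
    show "Visited (Br 2 1) \<in> goal (map_task n)" by simp
    fix l assume "l \<in> {((a, 2*n-2), True) | a. a \<in> gp_layer (map_task n) (2*n-2) \<and> Visited (Br 2 1) \<in> map_add a}"
    then obtain a where "l = ((a, 2*n-2), True)" "a \<in> gp_layer (map_task n) (2*n-2)" "Visited (Br 2 1) \<in> map_add a" by blast
    with key[of a] show "neg l \<in> up_lits (map_cnf n) S0" by (simp add: neg_def U_def)
  qed
qed

end
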